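(* For every process $Q$ there exist $k\ge 0$, processes $P_1,\ldots,P_k$, prefixes $\alpha_1,\ldots,\alpha_k$, a sequence of names $\vec c$, and sequences of names $\vec a_1,\ldots,\vec a_k$ (where $\vec c$ and each $\vec a_i$ may be empty) such that $$Q \equiv (\nu \vec c)\big((\vec a_1)\alpha_1.P_1 \mid (\vec a_2)\alpha_2.P_2 \mid \cdots \mid (\vec a_k)\alpha_k.P_k\big).$$
   Context: Let $\mathcal N$ be a countable set of names, ranged over by $a,b,c,x,y,z$. Processes are generated by $P,Q ::= 0 \mid P\mid Q \mid (\nu a)P \mid (a)P \mid \alpha.P$, where $(\nu a)P$ is name restriction (binding $a$), $(a)P$ is the authorization scope (meaning $P$ is authorized to act on channel $a$; here $a$ is not bound), and prefixes are $\alpha ::= \overline{a}\langle b\rangle$ (output of $b$ on $a$) $\mid a(x)$ (input on $a$, binding $x$ in the continuation) $\mid \overline{a}\langle\!\langle b\rangle\!\rangle$ (send the authorization for $b$ on $a$) $\mid a\langle\!\langle b\rangle\!\rangle$ (receive the authorization for $b$ on $a$; $b$ is not bound). $(\nu\vec c)P$ abbreviates $(\nu c_1)\cdots(\nu c_m)P$ and $(\vec a)P$ abbreviates $(a_1)\cdots(a_m)P$. Free names: $\mathrm{fn}(0)=\emptyset$, $\mathrm{fn}(P\mid Q)=\mathrm{fn}(P)\cup\mathrm{fn}(Q)$, $\mathrm{fn}((\nu a)P)=\mathrm{fn}(P)\setminus\{a\}$, $\mathrm{fn}((a)P)=\{a\}\cup\mathrm{fn}(P)$, $\mathrm{fn}(\overline{a}\langle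 b\rangle.P)=\mathrm{fn}(\overline{a}\langle\!\langle b\rangle\!\rangle.P)=\mathrm{fn}(a\langle\!\langle b\rangle\!\rangle.P)=\{a,b\}\cup\mathrm{fn}(P)$, $\mathrm{fn}(a(x).P)=\{a\}\cup(\mathrm{fn}(P)\setminus\{x\})$. Structural congruence $\equiv$ is the least congruence on processes satisfying: $P\mid 0\equiv P$; $P\mid Q\equiv Q\mid P$; $(P\mid Q)\mid R\equiv P\mid(Q\mid R)$; $(\nu a)0\equiv 0$; $(\nu a)(\nu b)P\equiv(\nu b)(\nu a)P$; $P\mid(\nu a)Q\equiv(\nu a)(P\mid Q)$ if $a\notin\mathrm{fn}(P)$; $P\equiv Q$ whenever $P$ and $Q$ are $\alpha$-convertible (renaming of bound names); $(a)(b)P\equiv(b)(a)P$; $(a)0\equiv 0$; $(a)(P\mid Q)\equiv(a)P\mid(a)Q$; $(a)(\nu b)P\equiv(\nu b)(a)P$ if $a\neq b$. An empty parallel composition ($k=0$) is read as $0$. *)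

theory Defs
  imports Main
begin

type_synonym name = nat

datatype prefix =
    Out name name      (* a<b> : output of b on a *)
  | Inp name name      (* a(x) : input on a, binds x in continuation *)
  | AOut name name     (* a<<b>> : send authorization for b on a *)
  | AInp name name     (* a<<b>> : receive authorization for b on a; b not bound *)

datatype proc =
    PNil
  | Par proc proc
  | Res name proc
  | Auth name proc     (* (a) P, a not bound *)
  | Pre prefix proc

fun fn :: "proc \<Rightarrow> name set" where
  "fn PNil = {}"
| "fn (Par P Q) = fn P \<union> fn Q"
| "fn (Res a P) = fn P - {a}"
| "fn (Auth a P) = {a} \<union> fn P"
| "fn (Pre (Out a b) P) = {a, b} \<union> fn P"
| "fn (Pre (AOut a b) P) = {a, b} \<union> fn P"
| "fn (Pre (AInp a b) P) = {a, b} \<union> fn P"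
| "fn (Pre (Inp a x) P) = {a} \<union> (fn P - {x})"

definition swapn :: "name \<Rightarrow> name \<Rightarrow> name \<Rightarrow> name" where
  "swapn a b c = (if c = a then b else if c = b then a else c)"

fun swap_pre :: "name \<Rightarrow> name \<Rightarrow> prefix \<Rightarrow> prefix" where
  "swap_pre a b (Out x y) = Out (swapn a b x) (swapn a b y)"
| "swap_pre a b (Inp x y) = Inp (swapn a b x) (swapn a b y)"
| "swap_pre a b (AOut x y) = AOut (swapn a b x) (swapn a b y)"
| "swap_pre a b (AInp x y) = AInp (swapn a b x) (swapn a b y)"

fun swap :: "name \<Rightarrow> name \<Rightarrow> proc \<Rightarrow> proc" where
  "swap a b PNil = PNil"
| "swap a b (Par P Q) = Par (swap a b P) (swap a b Q)"
| "swap a b (Res c P) = Res (swapn a b c) (swap a b P)"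
| "swap a b (Auth c P) = Auth (swapn a b c) (swap a b P)"
| "swap a b (Pre \<alpha> P) = Pre (swap_pre a b \<alpha>) (swap a b P)"

text \<open>Structural congruence: least congruence containing the axioms. Alpha-conversion
  is generated (under the congruence closure) by renaming a single binder to a fresh name.\<close>
inductive scong :: "proc \<Rightarrow> proc \<Rightarrow> bool" (infix "\<equiv>\<^sub>s" 50) where
  refl: "P \<equiv>\<^sub>s P"
| sym: "P \<equiv>\<^sub>s Q \<Longrightarrow> Q \<equiv>\<^sub>s P"
| trans: "P \<equiv>\<^sub>s Q \<Longrightarrow> Q \<equiv>\<^sub>s R \<Longrightarrow> P \<equiv>\<^sub>s R"
| cPar: "P \<equiv>\<^sub>s P' \<Longrightarrow> Q \<equiv>\<^sub>s Q' \<Longrightarrow> Par P Q \<equiv>\<^sub>s Par P' Q'"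
| cRes: "P \<equiv>\<^sub>s Q \<Longrightarrow> Res a P \<equiv>\<^sub>s Res a Q"
| cAuth: "P \<equiv>\<^sub>s Q \<Longrightarrow> Auth a P \<equiv>\<^sub>s Auth a Q"
| cPre: "P \<equiv>\<^sub>s Q \<Longrightarrow> Pre \<alpha> P \<equiv>\<^sub>s Pre \<alpha> Q"
| par_nil: "Par P PNil \<equiv>\<^sub>s P"
| par_comm: "Par P Q \<equiv>\<^sub>s Par Q P"
| par_assoc: "Par (Par P Q) R \<equiv>\<^sub>s Par P (Par Q R)"
| res_nil: "Res a PNil \<equiv>\<^sub>s PNil"
| res_res: "Res a (Res b P) \<equiv>\<^sub>s Res b (Res a P)"
| scope_ext: "a \<notin> fn P \<Longrightarrow> Par P (Res a Q) \<equiv>\<^sub>s Res a (Par P Q)"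
| alpha_res: "b \<notin> fn (Res a P) \<Longrightarrow> Res a P \<equiv>\<^sub>s Res b (swap a b P)"
| alpha_inp: "y \<notin> fn P - {x} \<Longrightarrow> Pre (Inp c x) P \<equiv>\<^sub>s Pre (Inp c y) (swap x y P)"
| auth_auth: "Auth a (Auth b P) \<equiv>\<^sub>s Auth b (Auth a P)"
| auth_nil: "Auth a PNil \<equiv>\<^sub>s PNil"
| auth_par: "Auth a (Par P Q) \<equiv>\<^sub>s Par (Auth a P) (Auth a Q)"
| auth_res: "a \<noteq> b \<Longrightarrow> Auth a (Res b P) \<equiv>\<^sub>s Res b (Auth a P)"

definition ress :: "name list \<Rightarrow> proc \<Rightarrow> proc" where
  "ress cs P = foldr Res cs P"

definition auths :: "name list \<Rightarrow> proc \<Rightarrow> proc" where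
  "auths as P = foldr Auth as P"

fun pars :: "proc list \<Rightarrow> proc" where
  "pars [] = PNil"
| "pars [P] = P"
| "pars (P # Ps) = Par P (pars Ps)"

end

theory Submission
  imports Defs
begin

lemma swapn_inj: "swapn a b x = swapn a b y \<longleftrightarrow> x = y"
  by (auto simp: swapn_def)

lemma fn_swap: "fn (swap a b P) = swapn a b ` fn P"
proof (induction P)
  case (Pre \<alpha> P)
  then show ?case
    by (cases \<alpha>) (auto simp: swapn_inj image_Un image_set_diff[OF injI] intro: injI)
qed (auto simp: swapn_inj image_set_diff[OF injI] intro: injI)

lemma finite_fn: "finite (fn P)"
proof (induction P)
  case (Pre \<alpha> P) then show ?case by (cases \<alpha>) auto
qed auto

lemma fn_pars: "fn (pars L) = (\<Union>x\<in>set L. fn x)"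
  by (induction L rule: pars.induct) auto

lemma fn_ress: "fn (ress cs P) = fn P - set cs"
  by (induction cs) (auto simp: ress_def)

lemma ress_Cons: "ress (c # cs) P = Res c (ress cs P)"
  by (simp add: ress_def)

lemma ress_append: "ress (xs @ ys) P = ress xs (ress ys P)"
  by (simp add: ress_def)

lemma auths_Cons: "auths (c # cs) P = Auth c (auths cs P)"
  by (simp add: auths_def)

lemma fn_auths: "fn (auths as P) = set as \<union> fn P"
  by (induction as) (auto simp: auths_def)

lemma swap_ress: "swap a b (ress cs P) = ress (map (swapn a b) cs) (swap a b P)"
  by (induction cs) (auto simp: ress_def)

lemma swap_auths: "swap a b (auths cs P) = auths (map (swapn a b) cs) (swap a b P)"
  by (induction cs) (auto simp: auths_def)

lemma swap_pars: "swap a b (pars L) = pars (map (swap a b) L)"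
  by (induction L rule: pars.induct) auto

definition g :: "name list \<times> prefix \<times> proc \<Rightarrow> proc" where
  "g = (\<lambda>(as, \<alpha>, P). auths as (Pre \<alpha> P))"

declare scong.trans[trans]

lemma pars_Cons: "pars (x # xs) \<equiv>\<^sub>s Par x (pars xs)"
  by (cases xs) (auto intro: scong.intros)

lemma ress_cong: "P \<equiv>\<^sub>s Q \<Longrightarrow> ress cs P \<equiv>\<^sub>s ress cs Q"
  by (induction cs) (auto simp: ress_def intro: scong.intros)

lemma pars_append: "Par (pars A) (pars B) \<equiv>\<^sub>s pars (A @ B)"
proof (induction A)
  case Nil
  then show ?case by simp (meson scong.par_comm scong.par_nil scong.trans)
next
  case (Cons x A)
  have "Par (pars (x # A)) (pars B) \<equiv>\<^sub>s Par (Par x (pars A)) (pars B)"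
    by (intro scong.cPar pars_Cons scong.refl)
  also have "\<dots> \<equiv>\<^sub>s Par x (Par (pars A) (pars B))" by (rule scong.par_assoc)
  also have "\<dots> \<equiv>\<^sub>s Par x (pars (A @ B))" using Cons by (intro scong.cPar scong.refl)
  also have "\<dots> \<equiv>\<^sub>s pars (x # (A @ B))" by (intro scong.sym[OF pars_Cons])
  finally show ?case by simp
qed

lemma auth_pars:
  "Auth a (pars (map g comps)) \<equiv>\<^sub>s pars (map g (map (\<lambda>(as, \<alpha>, P). (a # as, \<alpha>, P)) comps))"
proof (induction comps)
  case Nil
  then show ?case by (simp add: scong.auth_nil)
next
  case (Cons x comps)
  obtain as \<alpha> P where x: "x = (as, \<alpha>, P)" by (cases x) auto
  have "Auth a (pars (map g (x # comps))) \<equiv>\<^sub>s Auth a (Par (g x) (pars (map g comps)))"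
    by (simp add: scong.cAuth pars_Cons)
  also have "\<dots> \<equiv>\<^sub>s Par (Auth a (g x)) (Auth a (pars (map g comps)))" by (rule scong.auth_par)
  also have "\<dots> \<equiv>\<^sub>s Par (Auth a (g x)) (pars (map g (map (\<lambda>(as, \<alpha>, P). (a # as, \<alpha>, P)) comps)))"
    using Cons by (intro scong.cPar scong.refl)
  also have "\<dots> \<equiv>\<^sub>s pars (map g (map (\<lambda>(as, \<alpha>, P). (a # as, \<alpha>, P)) (x # comps)))"
    by (simp add: x g_def auths_Cons scong.sym[OF pars_Cons])
  finally show ?case .
qed

lemma auth_ress: "a \<notin> set cs \<Longrightarrow> Auth a (ress cs P) \<equiv>\<^sub>s ress cs (Auth a P)"
proof (induction cs)
  case Nil then show ?case by (simp add: ress_def scong.refl)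
next
  case (Cons c cs)
  then have "Auth a (ress (c # cs) P) \<equiv>\<^sub>s Res c (Auth a (ress cs P))"
    by (simp add: ress_Cons scong.auth_res)
  also have "\<dots> \<equiv>\<^sub>s Res c (ress cs (Auth a P))" using Cons by (simp add: scong.cRes)
  finally show ?case by (simp add: ress_Cons)
qed

lemma par_ress: "set cs \<inter> fn A = {} \<Longrightarrow> Par A (ress cs P) \<equiv>\<^sub>s ress cs (Par A P)"
proof (induction cs)
  case Nil then show ?case by (simp add: ress_def scong.refl)
next
  case (Cons c cs)
  then have "Par A (ress (c # cs) P) \<equiv>\<^sub>s Res c (Par A (ress cs P))"
    by (simp add: ress_Cons scong.scope_ext)
  also have "\<dots> \<equiv>\<^sub>s Res c (ress cs (Par A P))" using Cons by (simp add: scong.cRes)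
  finally show ?case by (simp add: ress_Cons)
qed

lemma swap_g: "swap a b (pars (map g comps)) =
   pars (map g (map (\<lambda>(as, \<alpha>, P). (map (swapn a b) as, swap_pre a b \<alpha>, swap a b P)) comps))"
  by (simp add: swap_pars g_def swap_auths case_prod_beta comp_def)

lemma main:
  "finite F \<Longrightarrow> \<exists>cs comps. Q \<equiv>\<^sub>s ress cs (pars (map g comps)) \<and> set cs \<inter> F = {}
      \<and> fn (ress cs (pars (map g comps))) \<subseteq> fn Q"
proof (induction Q arbitrary: F)
  case PNil
  show ?case by (rule exI[of _ "[]"], rule exI[of _ "[]"]) (simp add: ress_def scong.refl)
next
  case (Pre \<alpha> P)
  show ?case
    by (rule exI[of _ "[]"], rule exI[of _ "[([], \<alpha>, P)]"]) (simp add: ress_def g_def auths_def scong.refl)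
next
  case (Par Q1 Q2)
  from Par.IH(1)[of "F \<union> fn Q2"] Par.prems finite_fn obtain cs1 c1 where
    h1: "Q1 \<equiv>\<^sub>s ress cs1 (pars (map g c1))" "set cs1 \<inter> (F \<union> fn Q2) = {}"
       "fn (ress cs1 (pars (map g c1))) \<subseteq> fn Q1" by blast
  from Par.IH(2)[of "F \<union> fn Q1 \<union> set cs1"] Par.prems finite_fn obtain cs2 c2 where
    h2: "Q2 \<equiv>\<^sub>s ress cs2 (pars (map g c2))" "set cs2 \<inter> (F \<union> fn Q1 \<union> set cs1) = {}"
       "fn (ress cs2 (pars (map g c2))) \<subseteq> fn Q2" by blast
  define N1 where "N1 = pars (map g c1)"
  define N2 where "N2 = pars (map g c2)"
  have "Par Q1 Q2 \<equiv>\<^sub>s Par (ress cs1 N1) (ress cs2 N2)"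
    using h1 h2 by (simp add: N1_def N2_def scong.cPar)
  also have "\<dots> \<equiv>\<^sub>s ress cs2 (Par (ress cs1 N1) N2)"
    using h1 h2 by (intro par_ress) (auto simp: N1_def)
  also have "\<dots> \<equiv>\<^sub>s ress cs2 (Par N2 (ress cs1 N1))"
    by (intro ress_cong scong.par_comm)
  also have "\<dots> \<equiv>\<^sub>s ress cs2 (ress cs1 (Par N2 N1))"
    using h1 h2 by (intro ress_cong par_ress) (auto simp: N2_def fn_ress)
  also have "\<dots> \<equiv>\<^sub>s ress cs2 (ress cs1 (pars (map g (c2 @ c1))))"
    by (intro ress_cong) (simp add: N1_def N2_def pars_append)
  finally have "Par Q1 Q2 \<equiv>\<^sub>s ress (cs2 @ cs1) (pars (map g (c2 @ c1)))"
    by (simp add: ress_append)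
  moreover have "fn (ress (cs2 @ cs1) (pars (map g (c2 @ c1)))) \<subseteq> fn (Par Q1 Q2)"
    using h1(3) h2(3) by (auto simp: fn_ress fn_pars)
  moreover have "set (cs2 @ cs1) \<inter> F = {}" using h1 h2 by auto
  ultimately show ?case by blast
next
  case (Res a Q)
  from Res.IH[of "F \<union> {a}"] Res.prems obtain cs c where
    h: "Q \<equiv>\<^sub>s ress cs (pars (map g c))" "set cs \<inter> (F \<union> {a}) = {}"
       "fn (ress cs (pars (map g c))) \<subseteq> fn Q" by blast
  obtain b where b: "b \<notin> F \<union> {a} \<union> set cs \<union> fn Q"
    using ex_new_if_finite[OF infinite_UNIV_nat, of "F \<union> {a} \<union> set cs \<union> fn Q"]
      Res.prems finite_fn by auto
  define c' where "c' = map (\<lambda>(as, \<alpha>, P). (map (swapn a b) as, swap_pre a b \<alpha>, swap a b P)) c"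
  have mcs: "map (swapn a b) cs = cs"
    using h(2) b by (intro map_idI) (auto simp: swapn_def)
  have "Res a Q \<equiv>\<^sub>s Res a (ress cs (pars (map g c)))" using h by (simp add: scong.cRes)
  also have "\<dots> \<equiv>\<^sub>s Res b (swap a b (ress cs (pars (map g c))))"
    using h(3) b by (intro scong.alpha_res) auto
  also have "swap a b (ress cs (pars (map g c))) = ress cs (pars (map g c'))"
    by (simp add: swap_ress mcs swap_g c'_def)
  finally have "Res a Q \<equiv>\<^sub>s ress (b # cs) (pars (map g c'))" by (simp add: ress_Cons)
  moreover have "fn (ress (b # cs) (pars (map g c'))) \<subseteq> fn (Res a Q)"
  proof -
    have "fn (ress (b # cs) (pars (map g c'))) = swapn a b ` fn (ress cs (pars (map g c))) - {b}"
      by (simp add: ress_Cons fn_swap[symmetric] swap_ress mcs swap_g c'_def)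
    also have "\<dots> \<subseteq> swapn a b ` fn Q - {b}" using h(3) by auto
    also have "\<dots> \<subseteq> fn Q - {a}" using b by (auto simp: swapn_def)
    finally show ?thesis by simp
  qed
  moreover have "set (b # cs) \<inter> F = {}" using h b by auto
  ultimately show ?case by blast
next
  case (Auth a Q)
  from Auth.IH[of "F \<union> {a}"] Auth.prems obtain cs c where
    h: "Q \<equiv>\<^sub>s ress cs (pars (map g c))" "set cs \<inter> (F \<union> {a}) = {}"
       "fn (ress cs (pars (map g c))) \<subseteq> fn Q" by blast
  define c' where "c' = map (\<lambda>(as, \<alpha>, P). (a # as, \<alpha>, P)) c"
  have "Auth a Q \<equiv>\<^sub>s Auth a (ress cs (pars (map g c)))" using h by (simp add: scong.cAuth)
  also have "\<dots> \<equiv>\<^sub>s ress cs (Auth a (pars (map g c)))" using h by (intro auth_ress) auto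
  also have "\<dots> \<equiv>\<^sub>s ress cs (pars (map g c'))" unfolding c'_def by (intro ress_cong auth_pars)
  finally have "Auth a Q \<equiv>\<^sub>s ress cs (pars (map g c'))" .
  moreover have "fn (ress cs (pars (map g c'))) \<subseteq> fn (Auth a Q)"
  proof -
    have "fn (pars (map g c')) \<subseteq> {a} \<union> fn (pars (map g c))"
      unfolding fn_pars c'_def g_def by (auto simp: fn_auths split: prod.splits)
    then show ?thesis using h(2,3) by (auto simp: fn_ress)
  qed
  moreover have "set cs \<inter> F = {}" using h by auto
  ultimately show ?case by blast
qed

theorem mainTheorem1:
  fixes Q :: proc
  shows "\<exists>(cs :: name list) (comps :: (name list \<times> prefix \<times> proc) list).
           Q \<equiv>\<^sub>s ress cs (pars (map (\<lambda>(as, \<alpha>, P). auths as (Pre \<alpha> P)) comps))"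
  using main[of "{}" Q] unfolding g_def by auto

end
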